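(* Let $n,\ell$ be positive integers, let $f:(\mathbb{R}^n,0)\to(\mathbb{R}^n,0)$ be a $C^\infty$ map-germ, and for each $i$ with $1\le i\le \ell$ let $\mu_i:(\mathbb{R}^n,0)\to\mathbb{R}$ be a $C^\infty$ function-germ. Then the map-germ $F:(\mathbb{R}^n,0)\to\mathbb{R}^{n+\ell}$ defined by \[ F=\left(f,\ \mu_1|Jf|^2,\ \ldots,\ \mu_\ell|Jf|^2\right) \] is a frontal.
   Context: All map-germs, function-germs and vector fields are $C^\infty$. For a map-germ $f:(\mathbb{R}^n,0)\to(\mathbb{R}^n,0)$, $|Jf|$ denotes the Jacobian determinant of $f$ (so $|Jf|^2$ is its square). A vector field along a map-germ $F:(\mathbb{R}^n,0)\to\mathbb{R}^{n+\ell}$ is a germ $\Phi:(\mathbb{R}^n,0)\to T\mathbb{R}^{n+\ell}$ with $\pi\circ\Phi=F$, where $\pi$ is the tangent bundle projection; write $\Phi(x)=(F(x),\phi(x))$ with $\phi(x)\in T_{F(x)}\mathbb{R}^{n+\ell}\cong\mathbb{R}^{n+\ell}$. $F$ is called a frontal if there exist vector fields $\Phi_1,\ldots,\Phi_\ell$ along $F$, $\Phi_i=(F,\phi_i)$, such that: (1) for every $i$ and every germ of vector field $\xi$ on $(\mathbb{R}^n,0)$, $\phi_i(x)\cdot dF_x(\xi(x))=0$ (Euclidean scalar product) for all $x$ near $0$; (2) $\phi_i(0)\neq 0$ for every $i$; (3) $\phi_1(0),\ldots,\phi_\ell(0)$ are linearly independent. *)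

theory Defs
  imports "HOL-Analysis.Analysis"
begin

fun Ck_on :: "nat \<Rightarrow> ('a::real_normed_vector \<Rightarrow> 'b::real_normed_vector) \<Rightarrow> 'a set \<Rightarrow> bool" where
  "Ck_on 0 f U = continuous_on U f"
| "Ck_on (Suc k) f U =
     (\<exists>D. (\<forall>x\<in>U. (f has_derivative D x) (at x)) \<and> (\<forall>v. Ck_on k (\<lambda>x. D x v) U))"

definition smooth_on :: "('a::real_normed_vector \<Rightarrow> 'b::real_normed_vector) \<Rightarrow> 'a set \<Rightarrow> bool" where
  "smooth_on f U \<longleftrightarrow> (\<forall>k. Ck_on k f U)"

definition smooth_germ :: "('a::real_normed_vector \<Rightarrow> 'b::real_normed_vector) \<Rightarrow> bool" where
  "smooth_germ f \<longleftrightarrow> (\<exists>U. open U \<and> 0 \<in> U \<and> smooth_on f U)"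

definition jac_det :: "(real^'n \<Rightarrow> real^'n) \<Rightarrow> real^'n \<Rightarrow> real" where
  "jac_det f x = det (matrix (frechet_derivative f (at x)))"

text \<open>Frontal: F : (R^n,0) \<rightarrow> R^(n+l), with l = CARD('l). A vector field along F is
given by its vector part phi i :: R^n \<rightarrow> R^(n+l) (a smooth germ).\<close>
definition frontal :: "(real^'n \<Rightarrow> real^('n + 'l::finite)) \<Rightarrow> bool" where
  "frontal F \<longleftrightarrow>
    (\<exists>\<phi> :: 'l \<Rightarrow> real^'n \<Rightarrow> real^('n + 'l).
       (\<forall>i. smooth_germ (\<phi> i)) \<and>
       (\<forall>i. \<forall>\<xi> :: real^'n \<Rightarrow> real^'n. smooth_germ \<xi> \<longrightarrow>
            (\<forall>\<^sub>F x in nhds 0. \<phi> i x \<bullet> frechet_derivative F (at x) (\<xi> x) = 0)) \<and>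
       (\<forall>i. \<phi> i 0 \<noteq> 0) \<and>
       (\<forall>c :: 'l \<Rightarrow> real. (\<Sum>i\<in>UNIV. c i *\<^sub>R \<phi> i 0) = 0 \<longrightarrow> (\<forall>i. c i = 0)))"

end

theory Submission
  imports Defs
begin

lemma Ck_on_mono: "Ck_on (Suc k) f U \<Longrightarrow> Ck_on k f U"
proof (induction k arbitrary: f)
  case 0
  then obtain D where "\<forall>x\<in>U. (f has_derivative D x) (at x)" by auto
  then show ?case by (auto intro!: continuous_at_imp_continuous_on has_derivative_continuous)
next
  case (Suc k)
  then obtain D where "\<forall>x\<in>U. (f has_derivative D x) (at x)" "\<forall>v. Ck_on (Suc k) (\<lambda>x. D x v) U"
    by (metis Ck_on.simps(2))
  then show ?case using Suc.IH by auto
qed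

lemma Ck_on_cong: "Ck_on k f U \<Longrightarrow> open U \<Longrightarrow> (\<And>x. x \<in> U \<Longrightarrow> f x = g x) \<Longrightarrow> Ck_on k g U"
proof (induction k arbitrary: f g)
  case 0
  then show ?case by (auto intro: continuous_on_cong[THEN iffD1])
next
  case (Suc k)
  then obtain D where D: "\<forall>x\<in>U. (f has_derivative D x) (at x)" "\<forall>v. Ck_on k (\<lambda>x. D x v) U"
    by auto
  have "\<forall>x\<in>U. (g has_derivative D x) (at x)"
    using D(1) Suc.prems by (metis has_derivative_transform_within_open)
  then show ?case using D(2) by auto
qed

lemma Ck_on_subset: "Ck_on k f U \<Longrightarrow> V \<subseteq> U \<Longrightarrow> Ck_on k f V"
proof (induction k arbitrary: f)
  case 0 then show ?case by (auto intro: continuous_on_subset)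
next
  case (Suc k) then show ?case by (auto 0 3)
qed

lemma Ck_on_const: "Ck_on k (\<lambda>x. c) U"
proof (induction k arbitrary: c)
  case 0 then show ?case by simp
next
  case (Suc k) then show ?case
    by (auto intro!: exI[of _ "\<lambda>x v. 0"])
qed

lemma Ck_on_add: "Ck_on k f U \<Longrightarrow> Ck_on k g U \<Longrightarrow> Ck_on k (\<lambda>x. f x + g x) U"
proof (induction k arbitrary: f g)
  case 0 then show ?case by (auto intro: continuous_on_add)
next
  case (Suc k)
  obtain Df where Df: "\<forall>x\<in>U. (f has_derivative Df x) (at x)" "\<forall>v. Ck_on k (\<lambda>x. Df x v) U"
    using Suc.prems by auto
  obtain Dg where Dg: "\<forall>x\<in>U. (g has_derivative Dg x) (at x)" "\<forall>v. Ck_on k (\<lambda>x. Dg x v) U"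
    using Suc.prems by auto
  show ?case
    apply (simp only: Ck_on.simps)
    apply (rule exI[of _ "\<lambda>x v. Df x v + Dg x v"])
    using Df Dg Suc.IH by (auto intro: has_derivative_add)
qed

lemma Ck_on_linear: "bounded_linear L \<Longrightarrow> Ck_on k f U \<Longrightarrow> Ck_on k (\<lambda>x. L (f x)) U"
proof (induction k arbitrary: f)
  case 0 then show ?case
    using continuous_on_compose[of U f L] linear_continuous_on[OF 0(1)]
    by (auto simp: o_def intro: continuous_on_subset)
next
  case (Suc k)
  obtain Df where Df: "\<forall>x\<in>U. (f has_derivative Df x) (at x)" "\<forall>v. Ck_on k (\<lambda>x. Df x v) U"
    using Suc.prems by auto
  show ?case
    apply (simp only: Ck_on.simps)
    apply (rule exI[of _ "\<lambda>x v. L (Df x v)"])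
    apply (intro conjI ballI allI)
    subgoal for x using Df(1) bounded_linear.has_derivative[OF Suc.prems(1)] by blast
    subgoal for v using Df(2) Suc.IH[OF Suc.prems(1)] by blast
    done
qed

lemma Ck_on_mult:
  fixes f g :: "'a::real_normed_vector \<Rightarrow> real"
  shows "Ck_on k f U \<Longrightarrow> Ck_on k g U \<Longrightarrow> Ck_on k (\<lambda>x. f x * g x) U"
proof (induction k arbitrary: f g)
  case 0 then show ?case by (auto intro: continuous_on_mult)
next
  case (Suc k)
  obtain Df where Df: "\<forall>x\<in>U. (f has_derivative Df x) (at x)" "\<forall>v. Ck_on k (\<lambda>x. Df x v) U"
    using Suc.prems by auto
  obtain Dg where Dg: "\<forall>x\<in>U. (g has_derivative Dg x) (at x)" "\<forall>v. Ck_on k (\<lambda>x. Dg x v) U"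
    using Suc.prems by auto
  have f: "Ck_on k f U" and g: "Ck_on k g U" using Suc.prems Ck_on_mono by blast+
  show ?case
    apply (simp only: Ck_on.simps)
    apply (rule exI[of _ "\<lambda>x v. f x * Dg x v + Df x v * g x"])
    using Df Dg Suc.IH f g by (auto intro!: has_derivative_mult Ck_on_add)
qed

lemma Ck_on_sum: "finite S \<Longrightarrow> (\<And>i. i \<in> S \<Longrightarrow> Ck_on k (f i) U) \<Longrightarrow> Ck_on k (\<lambda>x. \<Sum>i\<in>S. f i x) U"
  by (induction S rule: finite_induct) (auto intro: Ck_on_const Ck_on_add)

lemma Ck_on_prod:
  fixes f :: "'i \<Rightarrow> 'a::real_normed_vector \<Rightarrow> real"
  shows "finite S \<Longrightarrow> (\<And>i. i \<in> S \<Longrightarrow> Ck_on k (f i) U) \<Longrightarrow> Ck_on k (\<lambda>x. \<Prod>i\<in>S. f i x) U"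
  by (induction S rule: finite_induct) (auto intro: Ck_on_const Ck_on_mult)

lemma vec_expand: "(x::real^'b) = (\<Sum>i\<in>UNIV. (x $ i) *\<^sub>R axis i 1)"
  unfolding vec_eq_iff sum_component axis_def
  by (simp add: if_distrib[of "\<lambda>t. _ * t"] cong: if_cong)

lemma Ck_on_vec:
  fixes f :: "'a::real_normed_vector \<Rightarrow> real^'b"
  assumes "\<And>i. Ck_on k (\<lambda>x. f x $ i) U"
  shows "Ck_on k f U"
proof -
  have ck: "Ck_on k (\<lambda>x. \<Sum>i\<in>UNIV. (f x $ i) *\<^sub>R (axis i 1 :: real^'b)) U"
    by (rule Ck_on_sum) (auto intro!: Ck_on_linear[OF bounded_linear_scaleR_left] assms)
  have eq: "(\<lambda>x. \<Sum>i\<in>UNIV. (f x $ i) *\<^sub>R axis i 1) = f"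
    by (rule ext, rule vec_expand[symmetric])
  show ?thesis using ck unfolding eq .
qed

lemma Ck_on_nth: "Ck_on k f U \<Longrightarrow> Ck_on k (\<lambda>x. f x $ i) U"
  by (rule Ck_on_linear[OF bounded_linear_vec_nth])

lemma Ck_on_deriv:
  assumes "\<forall>k. Ck_on k f U" "open U"
  shows "\<forall>x\<in>U. (f has_derivative frechet_derivative f (at x)) (at x)"
    and "\<forall>k. Ck_on k (\<lambda>x. frechet_derivative f (at x) v) U"
proof -
  obtain D where D: "\<forall>x\<in>U. (f has_derivative D x) (at x)"
    using assms(1)[rule_format, of 1] by auto
  then show "\<forall>x\<in>U. (f has_derivative frechet_derivative f (at x)) (at x)"
    using frechet_derivative_at by metis
  show "\<forall>k. Ck_on k (\<lambda>x. frechet_derivative f (at x) v) U"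
  proof
    fix k
    obtain D where D: "\<forall>x\<in>U. (f has_derivative D x) (at x)" "\<forall>v. Ck_on k (\<lambda>x. D x v) U"
      using assms(1)[rule_format, of "Suc k"] by auto
    show "Ck_on k (\<lambda>x. frechet_derivative f (at x) v) U"
      apply (rule Ck_on_cong[OF D(2)[rule_format, of v] assms(2)])
      using D(1) frechet_derivative_at by metis
  qed
qed


definition cof :: "real^'n^'n \<Rightarrow> 'n \<Rightarrow> 'n \<Rightarrow> real" where
  "cof A m k = det (\<chi> i. if i = k then axis m 1 else row i (transpose A))"

lemma det_row_lin:
  fixes A :: "real^'n^'n"
  shows "det (\<chi> i. if i = k then z else row i (transpose A)) = (\<Sum>m\<in>UNIV. z$m * cof A m k)"
proof -
  have z: "z = (\<Sum>m\<in>UNIV. z$m *s axis m 1)"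
    using vec_expand[of z] by (simp add: scalar_mult_eq_scaleR)
  have "det (\<chi> i. if i = k then z else row i (transpose A))
      = det (\<chi> i. if i = k then (\<Sum>m\<in>UNIV. z$m *s axis m 1) else row i (transpose A))"
    using z by metis
  also have "\<dots> = (\<Sum>m\<in>UNIV. det (\<chi> i. if i = k then z$m *s axis m 1 else row i (transpose A)))"
    by (rule det_linear_row_sum[of UNIV k "\<lambda>i m. z$m *s axis m 1"]) simp
  also have "\<dots> = (\<Sum>m\<in>UNIV. z$m * cof A m k)"
    unfolding cof_def by (simp add: det_row_mul)
  finally show ?thesis .
qed

lemma det_row_cramer:
  fixes A :: "real^'n^'n"
  shows "det (\<chi> i. if i = k then A *v y else row i (transpose A)) = y$k * det A"
proof -
  have eq: "(\<Sum>i\<in>UNIV. y$i *s row i (transpose A)) = A *v y"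
    by (simp add: vec_eq_iff sum_component row_def transpose_def matrix_vector_mult_def mult.commute)
  show ?thesis using cramer_lemma_transpose[of k y "transpose A", unfolded eq det_transpose] .
qed

lemma adj_identity:
  fixes A :: "real^'n^'n"
  shows "(\<Sum>m\<in>UNIV. (\<Sum>k\<in>UNIV. cof A m k * w$k) * (A *v y)$m) = det A * (\<Sum>k\<in>UNIV. w$k * y$k)"
proof -
  have "det A * (\<Sum>k\<in>UNIV. w$k * y$k) = (\<Sum>k\<in>UNIV. w$k * (y$k * det A))"
    by (simp add: sum_distrib_left algebra_simps)
  also have "\<dots> = (\<Sum>k\<in>UNIV. w$k * (\<Sum>m\<in>UNIV. (A *v y)$m * cof A m k))"
    by (simp add: det_row_cramer[symmetric] det_row_lin)
  also have "\<dots> = (\<Sum>k\<in>UNIV. \<Sum>m\<in>UNIV. cof A m k * w$k * (A *v y)$m)"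
    by (simp add: sum_distrib_left algebra_simps)
  also have "\<dots> = (\<Sum>m\<in>UNIV. \<Sum>k\<in>UNIV. cof A m k * w$k * (A *v y)$m)"
    by (rule sum.swap)
  also have "\<dots> = (\<Sum>m\<in>UNIV. (\<Sum>k\<in>UNIV. cof A m k * w$k) * (A *v y)$m)"
    by (simp add: sum_distrib_right)
  finally show ?thesis by simp
qed

lemma Ck_on_det:
  fixes M :: "'a::real_normed_vector \<Rightarrow> real^'n^'n"
  assumes "\<And>i j. Ck_on k (\<lambda>x. M x $ i $ j) U"
  shows "Ck_on k (\<lambda>x. det (M x)) U"
  unfolding det_def
  by (intro Ck_on_sum Ck_on_mult Ck_on_const Ck_on_prod assms finite_permutations; simp)

lemma lin_expand:
  fixes D :: "real^'n \<Rightarrow> real"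
  assumes "linear D"
  shows "D v = (\<Sum>k\<in>UNIV. v$k * D (axis k 1))"
proof -
  have "D v = D (\<Sum>k\<in>UNIV. v$k *\<^sub>R axis k 1)" using vec_expand[of v] by metis
  also have "\<dots> = (\<Sum>k\<in>UNIV. v$k * D (axis k 1))"
    using assms by (simp add: linear_sum linear_scale)
  finally show ?thesis .
qed

lemma fd_nth:
  assumes "(g has_derivative D) (at x)"
  shows "frechet_derivative (\<lambda>x. g x $ j) (at x) v = frechet_derivative g (at x) v $ j"
proof -
  have "((\<lambda>x. g x $ j) has_derivative (\<lambda>v. D v $ j)) (at x)"
    using bounded_linear.has_derivative[OF bounded_linear_vec_nth assms] .
  then show ?thesis using assms frechet_derivative_at by metis
qed


lemma sum_UNIV_plus:
  fixes g :: "'a::finite + 'b::finite \<Rightarrow> real"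
  shows "(\<Sum>j\<in>UNIV. g j) = (\<Sum>m\<in>UNIV. g (Inl m)) + (\<Sum>i\<in>UNIV. g (Inr i))"
proof -
  have "(\<Sum>j\<in>UNIV. g j) = (\<Sum>j\<in>Inl ` UNIV \<union> Inr ` UNIV. g j)"
    by (simp only: UNIV_sum[symmetric])
  also have "\<dots> = (\<Sum>j\<in>Inl ` UNIV. g j) + (\<Sum>j\<in>Inr ` UNIV. g j)"
    by (rule sum.union_disjoint) auto
  also have "\<dots> = (\<Sum>m\<in>UNIV. g (Inl m)) + (\<Sum>i\<in>UNIV. g (Inr i))"
    by (simp add: sum.reindex)
  finally show ?thesis .
qed

lemma Ck_on_uminus: "Ck_on k f U \<Longrightarrow> Ck_on k (\<lambda>x. - f x) U"
  by (rule Ck_on_linear[OF bounded_linear_minus[OF bounded_linear_ident]])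

lemma main:
  fixes f :: "real^'n \<Rightarrow> real^'n" and \<mu> :: "'l::finite \<Rightarrow> real^'n \<Rightarrow> real"
  assumes U: "open U" "0 \<in> U" and sf: "\<forall>k. Ck_on k f U" and sm: "\<And>i. \<forall>k. Ck_on k (\<mu> i) U"
  shows "frontal ((\<lambda>x. \<chi> j. case j of Inl k \<Rightarrow> f x $ k
                                   | Inr i \<Rightarrow> \<mu> i x * (jac_det f x)\<^sup>2)
                   :: real^'n \<Rightarrow> real^('n + 'l))"
proof -
  define J where "J = jac_det f"
  define F where "F = ((\<lambda>x. \<chi> j. case j of Inl k \<Rightarrow> f x $ k
                                   | Inr i \<Rightarrow> \<mu> i x * (J x)\<^sup>2) :: real^'n \<Rightarrow> real^('n + 'l))"
  define A where "A = (\<lambda>x. matrix (frechet_derivative f (at x)))"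
  have J_fun: "J = (\<lambda>x. det (A x))" by (simp add: J_def A_def jac_det_def fun_eq_iff)
  have sA: "\<And>r c k. Ck_on k (\<lambda>x. A x $ r $ c) U"
    unfolding A_def matrix_def using Ck_on_nth[OF Ck_on_deriv(2)[OF sf U(1), rule_format]] by simp
  have sJ: "\<forall>k. Ck_on k J U" unfolding J_fun using Ck_on_det sA by blast
  define dmu where "dmu i k x = frechet_derivative (\<mu> i) (at x) (axis k 1)" for i k x
  define dJ where "dJ k x = frechet_derivative J (at x) (axis k 1)" for k x
  have sdmu: "\<And>i k kk. Ck_on kk (dmu i k) U"
    unfolding dmu_def using Ck_on_deriv(2)[OF sm U(1)] by blast
  have sdJ: "\<And>k kk. Ck_on kk (dJ k) U"
    unfolding dJ_def using Ck_on_deriv(2)[OF sJ U(1)] by blast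
  define w where "w i x = ((\<chi> k. -(J x * dmu i k x + 2 * \<mu> i x * dJ k x)) :: real^'n)" for i x
  define a where "a i x = ((\<chi> m. \<Sum>k\<in>UNIV. cof (A x) m k * w i x $ k) :: real^'n)" for i x
  define \<phi> where "\<phi> = (\<lambda>i x. (\<chi> j. case j of Inl m \<Rightarrow> a i x $ m | Inr i' \<Rightarrow> if i' = i then 1 else 0) :: real^('n+'l))"
  have scof: "Ck_on kk (\<lambda>x. cof (A x) m k) U" for kk m k
    unfolding cof_def
  proof (rule Ck_on_det)
    fix r c
    show "Ck_on kk (\<lambda>x. (\<chi> i. if i = k then axis m 1 else row i (transpose (A x))) $ r $ c) U"
      by (cases "r = k") (simp_all add: Ck_on_const row_def transpose_def sA)
  qed
  have sw: "Ck_on kk (\<lambda>x. w i x $ k) U" for kk i k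
    unfolding w_def vec_lambda_beta
    apply (intro Ck_on_uminus Ck_on_add Ck_on_mult)
    using sJ sdmu sdJ sm Ck_on_const by auto
  have sphi: "smooth_germ (\<phi> i)" for i
    unfolding smooth_germ_def smooth_on_def
  proof (intro exI[of _ U] conjI allI U)
    fix kk
    show "Ck_on kk (\<phi> i) U"
    proof (rule Ck_on_vec)
      fix j
      show "Ck_on kk (\<lambda>x. \<phi> i x $ j) U"
      proof (cases j)
        case (Inl m)
        then show ?thesis unfolding \<phi>_def a_def
          by (simp, intro Ck_on_sum Ck_on_mult scof sw; simp)
      next
        case (Inr i')
        then show ?thesis unfolding \<phi>_def by (simp add: Ck_on_const)
      qed
    qed
  qed
  have sF: "\<forall>k. Ck_on k F U"
  proof
    fix kk
    show "Ck_on kk F U"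
    proof (rule Ck_on_vec)
      fix j
      show "Ck_on kk (\<lambda>x. F x $ j) U"
      proof (cases j)
        case (Inl m)
        then show ?thesis unfolding F_def using Ck_on_nth[OF sf[rule_format, of kk], of m] by simp
      next
        case (Inr i')
        then show ?thesis unfolding F_def power2_eq_square
          by (simp, intro Ck_on_mult sJ[rule_format] sm[rule_format])
      qed
    qed
  qed
  have key: "\<phi> i x \<bullet> frechet_derivative F (at x) v = 0" if x: "x \<in> U" for i x v
  proof -
    have dF: "(F has_derivative frechet_derivative F (at x)) (at x)"
      using Ck_on_deriv(1)[OF sF U(1)] x by blast
    have df: "(f has_derivative frechet_derivative f (at x)) (at x)"
      using Ck_on_deriv(1)[OF sf U(1)] x by blast
    have dJx: "(J has_derivative frechet_derivative J (at x)) (at x)"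
      using Ck_on_deriv(1)[OF sJ U(1)] x by blast
    have dmx: "(\<mu> i has_derivative frechet_derivative (\<mu> i) (at x)) (at x)"
      using Ck_on_deriv(1)[OF sm U(1)] x by blast
    let ?dJ = "frechet_derivative J (at x) v"
    let ?dm = "frechet_derivative (\<mu> i) (at x) v"
    have inl: "frechet_derivative F (at x) v $ Inl m = (A x *v v) $ m" for m
    proof -
      have "frechet_derivative F (at x) v $ Inl m = frechet_derivative (\<lambda>x. F x $ Inl m) (at x) v"
        using fd_nth[OF dF] by simp
      also have "(\<lambda>x. F x $ Inl m) = (\<lambda>x. f x $ m)" unfolding F_def by simp
      also have "frechet_derivative (\<lambda>x. f x $ m) (at x) v = frechet_derivative f (at x) v $ m"
        using fd_nth[OF df] by simp
      also have "frechet_derivative f (at x) v = A x *v v"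
        unfolding A_def using fun_cong[OF matrix_vector_mul(2)[OF has_derivative_linear[OF df]], of v] by simp
      finally show ?thesis .
    qed
    have inr: "frechet_derivative F (at x) v $ Inr i = \<mu> i x * (J x * ?dJ + ?dJ * J x) + ?dm * (J x * J x)"
    proof -
      have hd: "((\<lambda>x. \<mu> i x * (J x * J x)) has_derivative
           (\<lambda>v. \<mu> i x * (J x * frechet_derivative J (at x) v + frechet_derivative J (at x) v * J x)
              + frechet_derivative (\<mu> i) (at x) v * (J x * J x))) (at x)"
        by (intro has_derivative_mult dmx dJx)
      have "frechet_derivative F (at x) v $ Inr i = frechet_derivative (\<lambda>x. F x $ Inr i) (at x) v"
        using fd_nth[OF dF] by simp
      also have "(\<lambda>x. F x $ Inr i) = (\<lambda>x. \<mu> i x * (J x * J x))" unfolding F_def by (simp add: power2_eq_square)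
      also have "frechet_derivative (\<lambda>x. \<mu> i x * (J x * J x)) (at x) = 
           (\<lambda>v. \<mu> i x * (J x * frechet_derivative J (at x) v + frechet_derivative J (at x) v * J x)
              + frechet_derivative (\<mu> i) (at x) v * (J x * J x))"
        using frechet_derivative_at[OF hd] by (rule sym)
      finally show ?thesis by simp
    qed
    have em: "?dm = (\<Sum>k\<in>UNIV. v$k * dmu i k x)"
      unfolding dmu_def by (rule lin_expand[OF has_derivative_linear[OF dmx]])
    have eJ: "?dJ = (\<Sum>k\<in>UNIV. v$k * dJ k x)"
      unfolding dJ_def by (rule lin_expand[OF has_derivative_linear[OF dJx]])
    have wv: "(\<Sum>k\<in>UNIV. w i x $ k * v $ k) = -(J x * ?dm + 2 * \<mu> i x * ?dJ)"
    proof -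
      have "(\<Sum>k\<in>UNIV. w i x $ k * v $ k) = (\<Sum>k\<in>UNIV. -(J x * (v$k * dmu i k x)) + -(2 * \<mu> i x * (v$k * dJ k x)))"
        unfolding w_def by (intro sum.cong refl) (simp add: algebra_simps)
      also have "\<dots> = -(J x * ?dm + 2 * \<mu> i x * ?dJ)"
        unfolding em eJ sum.distrib sum_negf sum_distrib_left by simp
      finally show ?thesis .
    qed
    have "\<phi> i x \<bullet> frechet_derivative F (at x) v
        = (\<Sum>m\<in>UNIV. a i x $ m * (A x *v v) $ m) + frechet_derivative F (at x) v $ Inr i"
      unfolding inner_vec_def
      by (subst sum_UNIV_plus) (simp add: \<phi>_def inl inner_real_def if_distrib[of "\<lambda>t. t * _"] cong: if_cong)
    also have "(\<Sum>m\<in>UNIV. a i x $ m * (A x *v v) $ m) = J x * (\<Sum>k\<in>UNIV. w i x $ k * v $ k)"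
      unfolding a_def J_fun using adj_identity by simp
    finally show ?thesis unfolding wv inr by (simp add: algebra_simps)
  qed
  show ?thesis
    unfolding F_def[unfolded J_def, symmetric] frontal_def
  proof (intro exI[of _ \<phi>] conjI allI impI)
    fix i
    show "smooth_germ (\<phi> i)" by (rule sphi)
  next
    fix i and \<xi> :: "real^'n \<Rightarrow> real^'n"
    show "\<forall>\<^sub>F x in nhds 0. \<phi> i x \<bullet> frechet_derivative F (at x) (\<xi> x) = 0"
      unfolding eventually_nhds
      by (rule exI[of _ U]) (simp add: U key)
  next
    fix i
    have "\<phi> i 0 $ Inr i = 1" unfolding \<phi>_def by simp
    then show "\<phi> i 0 \<noteq> 0" by auto
  next
    fix c :: "'l \<Rightarrow> real" and i
    assume h: "(\<Sum>i\<in>UNIV. c i *\<^sub>R \<phi> i 0) = 0"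
    have "(\<Sum>i\<in>UNIV. c i *\<^sub>R \<phi> i 0) $ Inr i = c i"
      unfolding \<phi>_def by (simp add: sum_component if_distrib[of "\<lambda>t. _ * t"] cong: if_cong)
    then show "c i = 0" using h by simp
  qed
qed

theorem theorem1:
  fixes f :: "real^'n \<Rightarrow> real^'n" and \<mu> :: "'l::finite \<Rightarrow> real^'n \<Rightarrow> real"
  assumes "smooth_germ f" and "f 0 = 0"
    and "\<forall>i. smooth_germ (\<mu> i)"
  shows "frontal ((\<lambda>x. \<chi> j. case j of Inl k \<Rightarrow> f x $ k
                                   | Inr i \<Rightarrow> \<mu> i x * (jac_det f x)\<^sup>2)
                   :: real^'n \<Rightarrow> real^('n + 'l))"
proof -
  obtain Uf where Uf: "open Uf" "0 \<in> Uf" "\<forall>k. Ck_on k f Uf"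
    using assms(1) unfolding smooth_germ_def smooth_on_def by blast
  have "\<forall>i. \<exists>V. open V \<and> 0 \<in> V \<and> (\<forall>k. Ck_on k (\<mu> i) V)"
    using assms(3) unfolding smooth_germ_def smooth_on_def by blast
  then obtain V where V: "\<And>i. open (V i) \<and> 0 \<in> V i \<and> (\<forall>k. Ck_on k (\<mu> i) (V i))"
    by metis
  define U where "U = Uf \<inter> (\<Inter>i. V i)"
  have oU: "open U" unfolding U_def using Uf(1) V by (intro open_Int open_INT) auto
  have zU: "0 \<in> U" unfolding U_def using Uf(2) V by auto
  have sf: "\<forall>k. Ck_on k f U" using Uf(3) Ck_on_subset unfolding U_def by blast
  have sm: "\<And>i. \<forall>k. Ck_on k (\<mu> i) U"
  proof
    fix i k
    show "Ck_on k (\<mu> i) U" using V[of i] Ck_on_subset[of k "\<mu> i" "V i" U] unfolding U_def by blast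
  qed
  show ?thesis by (rule main[OF oU zU sf sm])
qed

end
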